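(* Let $1<\alpha<2$, $w>0$ and $p,q\in\mathcal{P}_{\alpha,w}$. Then $$d_\alpha(T[p],T[q])\le \frac{2}{\alpha+1}\,d_\alpha(p,q).$$
   Context: For $\alpha\ge 1$ and $w>0$, $\mathcal{P}_{\alpha,w}$ is the set of probability densities $p$ on $[0,\infty)$ with $\int_0^\infty x\,p(x)\,dx=w$ and $\int_0^\infty x^\alpha p(x)\,dx<\infty$. For $p,q\in\mathcal{P}_{\alpha,w}$, $d_\alpha(p,q)=\sup_{s>0}\frac{|\mathcal{L}[p](s)-\mathcal{L}[q](s)|}{s^\alpha}$, where $\mathcal{L}[p](s)=\int_0^\infty e^{-sx}p(x)\,dx$ is the Laplace transform. For a probability density $p$ on $[0,\infty)$, $S[p](x)=\int_x^\infty \frac{p(u)}{u}\,du$ and $T[p](x)=\int_0^x S[p](x-v)\,S[p](v)\,dv$ for $x\ge0$. *)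

theory Defs
  imports "HOL-Analysis.Analysis"
begin

text \<open>Probability densities on [0,infinity) are represented by functions real => real;
  only their values on {0..} matter.\<close>

definition prob_density_nonneg :: "(real \<Rightarrow> real) \<Rightarrow> bool" where
  "prob_density_nonneg p \<longleftrightarrow>
     p \<in> borel_measurable lborel \<and>
     (\<forall>x\<ge>0. 0 \<le> p x) \<and>
     set_integrable lborel {0..} p \<and>
     (\<integral>x\<in>{0..}. p x \<partial>lborel) = 1"

definition P_class :: "real \<Rightarrow> real \<Rightarrow> (real \<Rightarrow> real) set" where
  "P_class \<alpha> w = {p. prob_density_nonneg p \<and>
       set_integrable lborel {0..} (\<lambda>x. x * p x) \<and>
       (\<integral>x\<in>{0..}. x * p x \<partial>lborel) = w \<and>
       (\<integral>\<^sup>+x\<in>{0..}. ennreal (x powr \<alpha> * p x) \<partial>lborel) < \<infinity>}"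

definition laplace :: "(real \<Rightarrow> real) \<Rightarrow> real \<Rightarrow> real" where
  "laplace p s = (\<integral>x\<in>{0..}. exp (- s * x) * p x \<partial>lborel)"

definition d_alpha :: "real \<Rightarrow> (real \<Rightarrow> real) \<Rightarrow> (real \<Rightarrow> real) \<Rightarrow> ereal" where
  "d_alpha \<alpha> p q = (SUP s\<in>{0<..}. ereal (\<bar>laplace p s - laplace q s\<bar> / s powr \<alpha>))"

definition S_op :: "(real \<Rightarrow> real) \<Rightarrow> real \<Rightarrow> real" where
  "S_op p x = (\<integral>u\<in>{x..}. p u / u \<partial>lborel)"

definition T_op :: "(real \<Rightarrow> real) \<Rightarrow> real \<Rightarrow> real" where
  "T_op p x = (\<integral>v\<in>{0..x}. S_op p (x - v) * S_op p v \<partial>lborel)"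

end

theory Submission
  imports Defs
begin



definition dens :: "(real \<Rightarrow> real) \<Rightarrow> bool" where
  "dens p \<longleftrightarrow> p \<in> borel_measurable borel \<and> (\<forall>x\<ge>0. 0 \<le> p x) \<and>
     (\<integral>\<^sup>+ x. ennreal (indicator {0..} x * p x) \<partial>lborel) = 1"

lemma P_class_dens:
  assumes "p \<in> P_class \<alpha> w" shows "dens p"
proof -
  have pd: "prob_density_nonneg p" using assms by (simp add: P_class_def)
  then have m: "p \<in> borel_measurable borel" and nn: "\<forall>x\<ge>0. 0 \<le> p x"
    and i: "integrable lborel (\<lambda>x. indicator {0..} x * p x)"
    and e: "(\<integral>x. indicator {0..} x * p x \<partial>lborel) = 1"
    by (auto simp: prob_density_nonneg_def set_integrable_def set_lebesgue_integral_def)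
  have "(\<integral>\<^sup>+ x. ennreal (indicator {0..} x * p x) \<partial>lborel) = ennreal (\<integral>x. indicator {0..} x * p x \<partial>lborel)"
    by (rule nn_integral_eq_integral[OF i]) (use nn in \<open>auto split: split_indicator\<close>)
  with m nn e show ?thesis by (simp add: dens_def)
qed

lemma nn_FTC:
  fixes f F :: "real \<Rightarrow> real"
  assumes "a \<le> b" "continuous_on {a..b} f" "\<And>x. x \<in> {a..b} \<Longrightarrow> 0 \<le> f x"
    "(f has_integral I) {a..b}"
  shows "(\<integral>\<^sup>+ x. ennreal (indicator {a..b} x * f x) \<partial>lborel) = ennreal I"
proof -
  have si: "set_integrable lborel {a..b} f"
    by (rule borel_integrable_atLeastAtMost'[OF assms(2)])
  have "(LINT x : {a..b} | lborel. f x) = integral {a..b} f"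
    by (rule set_borel_integral_eq_integral(2)[OF si])
  also have "\<dots> = I" using assms(4) by (rule integral_unique)
  finally have e: "(\<integral>x. indicator {a..b} x * f x \<partial>lborel) = I"
    by (simp add: set_lebesgue_integral_def)
  have i: "integrable lborel (\<lambda>x. indicator {a..b} x * f x)"
    using si by (simp add: set_integrable_def)
  show ?thesis
    by (subst nn_integral_eq_integral[OF i]) (use assms(3) e in \<open>auto split: split_indicator\<close>)
qed

lemma S_eq:
  assumes "dens p" "0 \<le> y"
  shows "S_op p y = enn2real (\<integral>\<^sup>+ u. ennreal (if y \<le> u then p u / u else 0) \<partial>lborel)"
proof -
  have [measurable]: "p \<in> borel_measurable borel" using assms by (simp add: dens_def)
  have [measurable]: "p \<in> borel_measurable lborel" by simp
  have "S_op p y = (\<integral>u. (if y \<le> u then p u / u else 0) \<partial>lborel)"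
    by (auto simp: S_op_def set_lebesgue_integral_def intro!: Bochner_Integration.integral_cong split: split_indicator)
  also have "\<dots> = enn2real (\<integral>\<^sup>+ u. ennreal (if y \<le> u then p u / u else 0) \<partial>lborel)"
    by (rule integral_eq_nn_integral) (use assms in \<open>auto simp: dens_def\<close>)
  finally show ?thesis .
qed

lemma S_fin:
  assumes "dens p" "0 < y"
  shows "(\<integral>\<^sup>+ u. ennreal (if y \<le> u then p u / u else 0) \<partial>lborel) \<le> ennreal (1 / y)"
proof -
  have [measurable]: "p \<in> borel_measurable borel" using assms by (simp add: dens_def)
  have "(\<integral>\<^sup>+ u. ennreal (if y \<le> u then p u / u else 0) \<partial>lborel)
     \<le> (\<integral>\<^sup>+ u. ennreal (1/y) * ennreal (indicator {0..} u * p u) \<partial>lborel)"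
  proof (rule nn_integral_mono)
    fix u
    show "ennreal (if y \<le> u then p u / u else 0) \<le> ennreal (1/y) * ennreal (indicator {0..} u * p u)"
    proof (cases "y \<le> u")
      case True
      then have "0 \<le> p u" using assms by (auto simp: dens_def)
      then have "p u / u \<le> 1 / y * (indicator {0..} u * p u)"
        using True assms by (auto simp: divide_simps mult_left_mono)
      then have "ennreal (p u / u) \<le> ennreal (1 / y * (indicator {0..} u * p u))"
        by (rule ennreal_leI)
      also have "\<dots> = ennreal (1/y) * ennreal (indicator {0..} u * p u)"
        by (rule ennreal_mult') (use assms in auto)
      finally show ?thesis using True by (simp only: if_True)
    qed simp
  qed
  also have "\<dots> = ennreal (1/y) * (\<integral>\<^sup>+ u. ennreal (indicator {0..} u * p u) \<partial>lborel)"
    by (rule nn_integral_cmult) measurable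
  also have "\<dots> = ennreal (1/y)" using assms by (simp add: dens_def)
  finally show ?thesis .
qed

lemma S_meas:
  assumes [measurable]: "p \<in> borel_measurable borel"
  shows "S_op p \<in> borel_measurable borel"
proof -
  have [measurable]: "p \<in> borel_measurable lborel" by simp
  have "S_op p = (\<lambda>y. \<integral>u. (if y \<le> u then p u / u else 0) \<partial>lborel)"
    by (auto simp: S_op_def set_lebesgue_integral_def fun_eq_iff intro!: Bochner_Integration.integral_cong split: split_indicator)
  also have "\<dots> \<in> borel_measurable borel"
    by measurable
  finally show ?thesis .
qed

lemma T_meas:
  assumes [measurable]: "p \<in> borel_measurable borel"
  shows "T_op p \<in> borel_measurable borel"
proof -
  note S_meas[OF assms, measurable]
  have [measurable]: "S_op p \<in> borel_measurable lborel" using S_meas[OF assms] by simp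
  have "T_op p = (\<lambda>x. \<integral>v. (if 0 \<le> v \<and> v \<le> x then S_op p (x - v) * S_op p v else 0) \<partial>lborel)"
    by (auto simp: T_op_def set_lebesgue_integral_def fun_eq_iff intro!: Bochner_Integration.integral_cong split: split_indicator)
  also have "\<dots> \<in> borel_measurable borel"
    by measurable
  finally show ?thesis .
qed



lemma exp_int:
  assumes "0 < s" "0 \<le> u"
  shows "(\<integral>\<^sup>+ y. ennreal (indicator {0..u} y * exp (- s * y)) \<partial>lborel) = ennreal ((1 - exp (- s * u)) / s)"
proof -
  have d: "((\<lambda>y. - exp (- s * y) / s) has_vector_derivative exp (- s * y)) (at y)" for y
    unfolding has_real_derivative_iff_has_vector_derivative[symmetric]
    using assms by (auto intro!: derivative_eq_intros simp: field_simps)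
  have "((\<lambda>y. exp (- s * y)) has_integral ((- exp (- s * u) / s) - (- exp (- s * 0) / s))) {0..u}"
    by (rule fundamental_theorem_of_calculus_interior[OF assms(2)])
       (use assms d in \<open>auto intro!: continuous_intros\<close>)
  then have "((\<lambda>y. exp (- s * y)) has_integral ((1 - exp (- s * u)) / s)) {0..u}"
    by (simp add: diff_divide_distrib)
  then show ?thesis
    by (intro nn_FTC assms) (auto intro!: continuous_intros)
qed

lemma lapS:
  assumes "dens p" "0 < s"
  shows "(\<integral>\<^sup>+ y. ennreal (indicator {0..} y * (exp (- s * y) * S_op p y)) \<partial>lborel)
       = (\<integral>\<^sup>+ u. ennreal (if 0 < u then p u * (1 - exp (- s * u)) / (s * u) else 0) \<partial>lborel)"
proof -
  have [measurable]: "p \<in> borel_measurable borel" using assms by (simp add: dens_def)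
  have [measurable]: "p \<in> borel_measurable lborel" by simp
  have pn: "\<And>x. 0 \<le> x \<Longrightarrow> 0 \<le> p x" using assms by (simp add: dens_def)
  have "(\<integral>\<^sup>+ y. ennreal (indicator {0..} y * (exp (- s * y) * S_op p y)) \<partial>lborel)
     = (\<integral>\<^sup>+ y. (\<integral>\<^sup>+ u. ennreal (if 0 < y \<and> y \<le> u then exp (- s * y) * (p u / u) else 0) \<partial>lborel) \<partial>lborel)"
  proof (rule nn_integral_cong_AE)
    show "AE y in lborel. ennreal (indicator {0..} y * (exp (- s * y) * S_op p y)) =
      (\<integral>\<^sup>+ u. ennreal (if 0 < y \<and> y \<le> u then exp (- s * y) * (p u / u) else 0) \<partial>lborel)"
      using AE_lborel_singleton[of 0]
    proof eventually_elim
      fix y :: real assume "y \<noteq> 0"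
      show "ennreal (indicator {0..} y * (exp (- s * y) * S_op p y)) =
        (\<integral>\<^sup>+ u. ennreal (if 0 < y \<and> y \<le> u then exp (- s * y) * (p u / u) else 0) \<partial>lborel)"
      proof (cases "y < 0")
        case True then show ?thesis by simp
      next
        case False
        with \<open>y \<noteq> 0\<close> have y: "0 < y" by simp
        let ?N = "\<integral>\<^sup>+ u. ennreal (if y \<le> u then p u / u else 0) \<partial>lborel"
        have "?N \<le> ennreal (1/y)" by (rule S_fin[OF assms(1) y])
        then have fin: "?N < top" using le_less_trans by fastforce
        have "ennreal (indicator {0..} y * (exp (- s * y) * S_op p y)) = ennreal (exp (- s * y)) * ?N"
          using y fin by (simp add: S_eq[OF assms(1)] ennreal_mult')
        also have "\<dots> = (\<integral>\<^sup>+ u. ennreal (exp (- s * y)) * ennreal (if y \<le> u then p u / u else 0) \<partial>lborel)"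
          by (rule nn_integral_cmult[symmetric]) measurable
        also have "\<dots> = (\<integral>\<^sup>+ u. ennreal (if 0 < y \<and> y \<le> u then exp (- s * y) * (p u / u) else 0) \<partial>lborel)"
          using y by (intro nn_integral_cong) (simp add: ennreal_mult'[symmetric])
        finally show ?thesis .
      qed
    qed
  qed
  also have "\<dots> = (\<integral>\<^sup>+ u. (\<integral>\<^sup>+ y. ennreal (if 0 < y \<and> y \<le> u then exp (- s * y) * (p u / u) else 0) \<partial>lborel) \<partial>lborel)"
    by (intro lborel_pair.Fubini') measurable
  also have "\<dots> = (\<integral>\<^sup>+ u. ennreal (if 0 < u then p u * (1 - exp (- s * u)) / (s * u) else 0) \<partial>lborel)"
  proof (rule nn_integral_cong)
    fix u :: real
    show "(\<integral>\<^sup>+ y. ennreal (if 0 < y \<and> y \<le> u then exp (- s * y) * (p u / u) else 0) \<partial>lborel)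
       = ennreal (if 0 < u then p u * (1 - exp (- s * u)) / (s * u) else 0)"
    proof (cases "0 < u")
      case False
      then have "(\<lambda>y. ennreal (if 0 < y \<and> y \<le> u then exp (- s * y) * (p u / u) else 0)) = (\<lambda>y. 0)"
        by (auto simp: fun_eq_iff)
      then show ?thesis using False by simp
    next
      case True
      have pu: "0 \<le> p u / u" using pn[of u] True by simp
      have "(\<integral>\<^sup>+ y. ennreal (if 0 < y \<and> y \<le> u then exp (- s * y) * (p u / u) else 0) \<partial>lborel)
         = (\<integral>\<^sup>+ y. ennreal (p u / u) * ennreal (indicator {0..u} y * exp (- s * y)) \<partial>lborel)"
        using AE_lborel_singleton[of 0]
        by (intro nn_integral_cong_AE, eventually_elim)
           (use pu in \<open>auto simp: ennreal_mult'[symmetric] mult_ac split: split_indicator\<close>)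
      also have "\<dots> = ennreal (p u / u) * (\<integral>\<^sup>+ y. ennreal (indicator {0..u} y * exp (- s * y)) \<partial>lborel)"
        by (rule nn_integral_cmult) measurable
      also have "\<dots> = ennreal (p u / u) * ennreal ((1 - exp (- s * u)) / s)"
        using exp_int[OF assms(2), of u] True by simp
      also have "\<dots> = ennreal (p u * (1 - exp (- s * u)) / (s * u))"
        using pu by (simp add: ennreal_mult'[symmetric] mult_ac)
      finally show ?thesis using True by simp
    qed
  qed
  finally show ?thesis .
qed




definition Phi :: "(real \<Rightarrow> real) \<Rightarrow> real \<Rightarrow> ennreal" where
  "Phi p s = (\<integral>\<^sup>+ u. ennreal (if 0 < u then p u * (1 - exp (- s * u)) / (s * u) else 0) \<partial>lborel)"

lemma Phi_le:
  assumes "dens p" "0 < s"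
  shows "Phi p s \<le> 1"
proof -
  have [measurable]: "p \<in> borel_measurable borel" using assms by (simp add: dens_def)
  have pn: "\<And>x. 0 \<le> x \<Longrightarrow> 0 \<le> p x" using assms by (simp add: dens_def)
  have "Phi p s \<le> (\<integral>\<^sup>+ x. ennreal (indicator {0..} x * p x) \<partial>lborel)"
    unfolding Phi_def
  proof (rule nn_integral_mono)
    fix u :: real
    show "ennreal (if 0 < u then p u * (1 - exp (- s * u)) / (s * u) else 0) \<le> ennreal (indicator {0..} u * p u)"
    proof (cases "0 < u")
      case True
      have "1 - exp (- (s * u)) \<le> s * u" using exp_ge_add_one_self[of "- (s*u)"] by simp
      then have "(1 - exp (- s * u)) / (s * u) \<le> 1" using True assms by (simp add: divide_simps)
      then have "p u * ((1 - exp (- s * u)) / (s * u)) \<le> p u * 1"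
        by (rule mult_left_mono) (use pn[of u] True in simp)
      then show ?thesis using True by (intro ennreal_leI) simp
    qed simp
  qed
  also have "\<dots> = 1" using assms by (simp add: dens_def)
  finally show ?thesis .
qed

lemma lap_meas:
  assumes [measurable]: "p \<in> borel_measurable borel"
  shows "laplace p \<in> borel_measurable borel"
proof -
  have [measurable]: "p \<in> borel_measurable lborel" by simp
  have "laplace p = (\<lambda>t. \<integral>x. (if 0 \<le> x then exp (- t * x) * p x else 0) \<partial>lborel)"
    by (auto simp: laplace_def set_lebesgue_integral_def fun_eq_iff intro!: Bochner_Integration.integral_cong split: split_indicator)
  also have "\<dots> \<in> borel_measurable borel"
    by measurable
  finally show ?thesis .
qed

lemma lap_eq:
  assumes "dens p" "0 \<le> t"
  shows "laplace p t = enn2real (\<integral>\<^sup>+ u. ennreal (indicator {0..} u * (exp (- t * u) * p u)) \<partial>lborel)"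
    and "(\<integral>\<^sup>+ u. ennreal (indicator {0..} u * (exp (- t * u) * p u)) \<partial>lborel) \<le> 1"
proof -
  have [measurable]: "p \<in> borel_measurable borel" using assms by (simp add: dens_def)
  have pn: "\<And>x. 0 \<le> x \<Longrightarrow> 0 \<le> p x" using assms by (simp add: dens_def)
  show "laplace p t = enn2real (\<integral>\<^sup>+ u. ennreal (indicator {0..} u * (exp (- t * u) * p u)) \<partial>lborel)"
    unfolding laplace_def set_lebesgue_integral_def
    by (simp, rule integral_eq_nn_integral) (use pn in \<open>auto split: split_indicator\<close>)
  have "(\<integral>\<^sup>+ u. ennreal (indicator {0..} u * (exp (- t * u) * p u)) \<partial>lborel)
     \<le> (\<integral>\<^sup>+ x. ennreal (indicator {0..} x * p x) \<partial>lborel)"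
  proof (rule nn_integral_mono)
    fix u :: real
    show "ennreal (indicator {0..} u * (exp (- t * u) * p u)) \<le> ennreal (indicator {0..} u * p u)"
    proof (cases "0 \<le> u")
      case True
      have "exp (- t * u) \<le> 1" using True assms by simp
      then have "exp (- t * u) * p u \<le> 1 * p u"
        by (rule mult_right_mono) (use pn[of u] True in simp)
      then show ?thesis using True by (intro ennreal_leI) simp
    qed simp
  qed
  also have "\<dots> = 1" using assms by (simp add: dens_def)
  finally show "(\<integral>\<^sup>+ u. ennreal (indicator {0..} u * (exp (- t * u) * p u)) \<partial>lborel) \<le> 1" .
qed

lemma lap_int:
  assumes "dens p" "0 < s"
  shows "(\<integral>\<^sup>+ t. ennreal (indicator {0..s} t * laplace p t) \<partial>lborel) = ennreal s * Phi p s"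
proof -
  have [measurable]: "p \<in> borel_measurable borel" using assms by (simp add: dens_def)
  have [measurable]: "p \<in> borel_measurable lborel" by simp
  have pn: "\<And>x. 0 \<le> x \<Longrightarrow> 0 \<le> p x" using assms by (simp add: dens_def)
  have "(\<integral>\<^sup>+ t. ennreal (indicator {0..s} t * laplace p t) \<partial>lborel)
    = (\<integral>\<^sup>+ t. (\<integral>\<^sup>+ u. ennreal (indicator {0..s} t * (indicator {0..} u * (exp (- t * u) * p u))) \<partial>lborel) \<partial>lborel)"
  proof (rule nn_integral_cong)
    fix t :: real
    show "ennreal (indicator {0..s} t * laplace p t) =
      (\<integral>\<^sup>+ u. ennreal (indicator {0..s} t * (indicator {0..} u * (exp (- t * u) * p u))) \<partial>lborel)"
    proof (cases "t \<in> {0..s}")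
      case True
      then have t: "0 \<le> t" by simp
      have fin: "(\<integral>\<^sup>+ u. ennreal (indicator {0..} u * (exp (- t * u) * p u)) \<partial>lborel) < top"
        using lap_eq(2)[OF assms(1) t] by (simp add: le_less_trans top.not_eq_extremum)
      show ?thesis using True fin by (simp add: lap_eq(1)[OF assms(1) t])
    qed simp
  qed
  also have "\<dots> = (\<integral>\<^sup>+ u. (\<integral>\<^sup>+ t. ennreal (indicator {0..s} t * (indicator {0..} u * (exp (- t * u) * p u))) \<partial>lborel) \<partial>lborel)"
    by (intro lborel_pair.Fubini') measurable
  also have "\<dots> = (\<integral>\<^sup>+ u. ennreal s * ennreal (if 0 < u then p u * (1 - exp (- s * u)) / (s * u) else 0) \<partial>lborel)"
  proof (rule nn_integral_cong_AE)
    show "AE u in lborel. (\<integral>\<^sup>+ t. ennreal (indicator {0..s} t * (indicator {0..} u * (exp (- t * u) * p u))) \<partial>lborel)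
      = ennreal s * ennreal (if 0 < u then p u * (1 - exp (- s * u)) / (s * u) else 0)"
      using AE_lborel_singleton[of 0]
    proof eventually_elim
      fix u :: real assume "u \<noteq> 0"
      show "(\<integral>\<^sup>+ t. ennreal (indicator {0..s} t * (indicator {0..} u * (exp (- t * u) * p u))) \<partial>lborel)
        = ennreal s * ennreal (if 0 < u then p u * (1 - exp (- s * u)) / (s * u) else 0)"
      proof (cases "0 < u")
        case False
        with \<open>u \<noteq> 0\<close> have "u < 0" by simp
        then show ?thesis by simp
      next
        case True
        have "(\<integral>\<^sup>+ t. ennreal (indicator {0..s} t * (indicator {0..} u * (exp (- t * u) * p u))) \<partial>lborel)
          = (\<integral>\<^sup>+ t. ennreal (p u) * ennreal (indicator {0..s} t * exp (- u * t)) \<partial>lborel)"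
          using True pn[of u]
          by (intro nn_integral_cong) (auto simp: ennreal_mult'[symmetric] mult_ac split: split_indicator)
        also have "\<dots> = ennreal (p u) * (\<integral>\<^sup>+ t. ennreal (indicator {0..s} t * exp (- u * t)) \<partial>lborel)"
          by (rule nn_integral_cmult) measurable
        also have "\<dots> = ennreal (p u) * ennreal ((1 - exp (- u * s)) / u)"
          using exp_int[OF True, of s] assms by simp
        also have "\<dots> = ennreal s * ennreal (p u * (1 - exp (- s * u)) / (s * u))"
          using True pn[of u] assms by (simp add: ennreal_mult'[symmetric] mult_ac)
        finally show ?thesis using True by simp
      qed
    qed
  qed
  also have "\<dots> = ennreal s * Phi p s"
    unfolding Phi_def by (rule nn_integral_cmult) measurable
  finally show ?thesis .
qed




lemma conv_lap:
  fixes S :: "real \<Rightarrow> real"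
  assumes [measurable]: "S \<in> borel_measurable borel"
    and Sn: "\<And>y. 0 \<le> y \<Longrightarrow> 0 \<le> S y"
    and fin: "(\<integral>\<^sup>+ y. ennreal (indicator {0..} y * (exp (- s * y) * S y)) \<partial>lborel) < top"
  shows "(\<integral>\<^sup>+ x. ennreal (indicator {0..} x * (exp (- s * x) *
            (\<integral>v. indicator {0..x} v * (S (x - v) * S v) \<partial>lborel))) \<partial>lborel)
       = (\<integral>\<^sup>+ y. ennreal (indicator {0..} y * (exp (- s * y) * S y)) \<partial>lborel) ^ 2"
proof -
  have [measurable]: "S \<in> borel_measurable lborel" by simp
  define \<Psi> where "\<Psi> = (\<integral>\<^sup>+ y. ennreal (indicator {0..} y * (exp (- s * y) * S y)) \<partial>lborel)"
  define K where "K x = (\<integral>\<^sup>+ v. ennreal (if 0 \<le> v \<and> v \<le> x then S (x - v) * S v else 0) \<partial>lborel)" for x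
  have Kmeas[measurable]: "K \<in> borel_measurable borel"
    unfolding K_def by measurable
  have TK: "(\<integral>v. indicator {0..x} v * (S (x - v) * S v) \<partial>lborel) = enn2real (K x)" for x
  proof -
    have "(\<integral>v. indicator {0..x} v * (S (x - v) * S v) \<partial>lborel) = (\<integral>v. (if 0 \<le> v \<and> v \<le> x then S (x - v) * S v else 0) \<partial>lborel)"
      by (auto intro!: Bochner_Integration.integral_cong split: split_indicator)
    also have "\<dots> = enn2real (K x)"
      unfolding K_def
      by (rule integral_eq_nn_integral) (auto intro!: mult_nonneg_nonneg Sn)
    finally show ?thesis .
  qed
  define Q where "Q = (\<integral>\<^sup>+ x. ennreal (indicator {0..} x * exp (- s * x)) * K x \<partial>lborel)"
  have "Q = (\<integral>\<^sup>+ x. (\<integral>\<^sup>+ v. ennreal (if 0 \<le> v \<and> v \<le> x then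
              (exp (- s * (x - v)) * S (x - v)) * (exp (- s * v) * S v) else 0) \<partial>lborel) \<partial>lborel)"
    unfolding Q_def
  proof (rule nn_integral_cong)
    fix x :: real
    have "ennreal (indicator {0..} x * exp (- s * x)) * K x
       = (\<integral>\<^sup>+ v. ennreal (indicator {0..} x * exp (- s * x)) * ennreal (if 0 \<le> v \<and> v \<le> x then S (x - v) * S v else 0) \<partial>lborel)"
      unfolding K_def by (rule nn_integral_cmult[symmetric]) measurable
    also have "\<dots> = (\<integral>\<^sup>+ v. ennreal (if 0 \<le> v \<and> v \<le> x then
              (exp (- s * (x - v)) * S (x - v)) * (exp (- s * v) * S v) else 0) \<partial>lborel)"
    proof (rule nn_integral_cong)
      fix v :: real
      show "ennreal (indicator {0..} x * exp (- s * x)) * ennreal (if 0 \<le> v \<and> v \<le> x then S (x - v) * S v else 0)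
        = ennreal (if 0 \<le> v \<and> v \<le> x then (exp (- s * (x - v)) * S (x - v)) * (exp (- s * v) * S v) else 0)"
      proof (cases "0 \<le> v \<and> v \<le> x")
        case True
        have e: "exp (- s * x) = exp (- s * (x - v)) * exp (- s * v)"
          by (simp add: exp_add[symmetric] algebra_simps)
        have "0 \<le> S v * S (x - v)" using True Sn[of v] Sn[of "x - v"] by simp
        then show ?thesis using True unfolding e
          by (simp add: ennreal_mult'[symmetric] mult_ac)
      qed auto
    qed
    finally show "ennreal (indicator {0..} x * exp (- s * x)) * K x = \<dots>" .
  qed
  also have "\<dots> = (\<integral>\<^sup>+ v. (\<integral>\<^sup>+ x. ennreal (if 0 \<le> v \<and> v \<le> x then
              (exp (- s * (x - v)) * S (x - v)) * (exp (- s * v) * S v) else 0) \<partial>lborel) \<partial>lborel)"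
    by (intro lborel_pair.Fubini') measurable
  also have "\<dots> = (\<integral>\<^sup>+ v. ennreal (indicator {0..} v * (exp (- s * v) * S v)) * \<Psi> \<partial>lborel)"
  proof (rule nn_integral_cong)
    fix v :: real
    show "(\<integral>\<^sup>+ x. ennreal (if 0 \<le> v \<and> v \<le> x then
              (exp (- s * (x - v)) * S (x - v)) * (exp (- s * v) * S v) else 0) \<partial>lborel)
        = ennreal (indicator {0..} v * (exp (- s * v) * S v)) * \<Psi>"
    proof (cases "0 \<le> v")
      case False
      then show ?thesis by simp
    next
      case True
      have m: "(\<lambda>x. ennreal (if v \<le> x then exp (- s * (x - v)) * S (x - v) else 0)) \<in> borel_measurable borel"
        by measurable
      have "(\<integral>\<^sup>+ x. ennreal (if 0 \<le> v \<and> v \<le> x then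
              (exp (- s * (x - v)) * S (x - v)) * (exp (- s * v) * S v) else 0) \<partial>lborel)
          = (\<integral>\<^sup>+ x. ennreal (exp (- s * v) * S v) * ennreal (if v \<le> x then exp (- s * (x - v)) * S (x - v) else 0) \<partial>lborel)"
        using True Sn[of v]
        by (intro nn_integral_cong) (auto simp: ennreal_mult'[symmetric] mult_ac)
      also have "\<dots> = ennreal (exp (- s * v) * S v) * (\<integral>\<^sup>+ x. ennreal (if v \<le> x then exp (- s * (x - v)) * S (x - v) else 0) \<partial>lborel)"
        by (rule nn_integral_cmult) measurable
      also have "(\<integral>\<^sup>+ x. ennreal (if v \<le> x then exp (- s * (x - v)) * S (x - v) else 0) \<partial>lborel)
          = ennreal \<bar>1::real\<bar> * (\<integral>\<^sup>+ x. ennreal (if v \<le> v + 1 * x then exp (- s * (v + 1 * x - v)) * S (v + 1 * x - v) else 0) \<partial>lborel)"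
        by (rule nn_integral_real_affine[OF m]) simp
      also have "\<dots> = \<Psi>"
        unfolding \<Psi>_def by (auto intro!: nn_integral_cong split: split_indicator)
      finally show ?thesis using True by simp
    qed
  qed
  also have "\<dots> = \<Psi> * \<Psi>"
    by (subst nn_integral_multc) (measurable, simp add: \<Psi>_def)
  finally have Qeq: "Q = \<Psi> ^ 2" by (simp add: power2_eq_square)
  have "Q \<noteq> \<infinity>" using fin unfolding Qeq \<Psi>_def by (simp add: power2_eq_square ennreal_mult_eq_top_iff)
  then have "AE x in lborel. ennreal (indicator {0..} x * exp (- s * x)) * K x \<noteq> \<infinity>"
    unfolding Q_def by (intro nn_integral_PInf_AE) measurable
  then have "(\<integral>\<^sup>+ x. ennreal (indicator {0..} x * (exp (- s * x) *
            (\<integral>v. indicator {0..x} v * (S (x - v) * S v) \<partial>lborel))) \<partial>lborel) = Q"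
    unfolding Q_def
  proof (intro nn_integral_cong_AE, eventually_elim)
    fix x assume x: "ennreal (indicator {0..} x * exp (- s * x)) * K x \<noteq> \<infinity>"
    show "ennreal (indicator {0..} x * (exp (- s * x) *
            (\<integral>v. indicator {0..x} v * (S (x - v) * S v) \<partial>lborel))) = ennreal (indicator {0..} x * exp (- s * x)) * K x"
    proof (cases "0 \<le> x")
      case True
      then have "K x \<noteq> \<infinity>" using x by (auto simp: ennreal_mult_eq_top_iff)
      then show ?thesis using True by (simp add: TK ennreal_mult' less_top)
    qed simp
  qed
  then show ?thesis unfolding Qeq \<Psi>_def .
qed




lemma S_nonneg:
  assumes "dens p" "0 \<le> y" shows "0 \<le> S_op p y"
  using S_eq[OF assms] by simp

lemma key:
  assumes dp: "dens p" and s: "0 < s"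
  shows "laplace (T_op p) s = (enn2real (Phi p s))^2"
    and "s * enn2real (Phi p s) = (\<integral>t. indicator {0..s} t * laplace p t \<partial>lborel)"
    and "integrable lborel (\<lambda>t. indicator {0..s} t * laplace p t)"
    and "0 \<le> enn2real (Phi p s)" "enn2real (Phi p s) \<le> 1"
proof -
  have [measurable]: "p \<in> borel_measurable borel" using dp by (simp add: dens_def)
  note Sm[measurable] = S_meas[OF this]
  have Pl: "Phi p s \<le> 1" by (rule Phi_le[OF dp s])
  then have Pfin: "Phi p s < top" using le_less_trans by fastforce
  show "0 \<le> enn2real (Phi p s)" by simp
  show "enn2real (Phi p s) \<le> 1" using Pl Pfin
    by (metis enn2real_1 enn2real_mono ennreal_one_less_top one_ennreal_def)
  have Psi: "(\<integral>\<^sup>+ y. ennreal (indicator {0..} y * (exp (- s * y) * S_op p y)) \<partial>lborel) = Phi p s"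
    unfolding Phi_def by (rule lapS[OF dp s])
  have cl: "(\<integral>\<^sup>+ x. ennreal (indicator {0..} x * (exp (- s * x) *
            (\<integral>v. indicator {0..x} v * (S_op p (x - v) * S_op p v) \<partial>lborel))) \<partial>lborel)
       = (Phi p s) ^ 2"
    using conv_lap[OF Sm S_nonneg[OF dp], of s] Psi Pfin by simp
  have Teq: "T_op p x = (\<integral>v. indicator {0..x} v * (S_op p (x - v) * S_op p v) \<partial>lborel)" for x
    by (simp add: T_op_def set_lebesgue_integral_def)
  have Tn: "0 \<le> T_op p x" for x
    unfolding Teq
    by (rule Bochner_Integration.integral_nonneg)
       (auto intro!: mult_nonneg_nonneg S_nonneg[OF dp] split: split_indicator)
  note Tm[measurable] = T_meas[OF \<open>p \<in> borel_measurable borel\<close>]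
  have "laplace (T_op p) s = (\<integral>x. indicator {0..} x * (exp (- s * x) * T_op p x) \<partial>lborel)"
    by (simp add: laplace_def set_lebesgue_integral_def)
  also have "\<dots> = enn2real (\<integral>\<^sup>+ x. ennreal (indicator {0..} x * (exp (- s * x) * T_op p x)) \<partial>lborel)"
    by (rule integral_eq_nn_integral) (auto intro!: mult_nonneg_nonneg Tn)
  also have "\<dots> = (enn2real (Phi p s))^2"
    using cl unfolding Teq[symmetric] by (simp add: power2_eq_square enn2real_mult)
  finally show "laplace (T_op p) s = (enn2real (Phi p s))^2" .
  note Lm[measurable] = lap_meas[OF \<open>p \<in> borel_measurable borel\<close>]
  have Ln: "0 \<le> indicator {0..s} t * laplace p t" for t
    by (cases "t \<in> {0..s}") (auto simp: lap_eq(1)[OF dp])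
  have li: "(\<integral>\<^sup>+ t. ennreal (indicator {0..s} t * laplace p t) \<partial>lborel) = ennreal s * Phi p s"
    by (rule lap_int[OF dp s])
  show int: "integrable lborel (\<lambda>t. indicator {0..s} t * laplace p t)"
    by (rule integrableI_nonneg) (use Ln li Pfin in \<open>auto simp: ennreal_mult_less_top\<close>)
  have "ennreal (\<integral>t. indicator {0..s} t * laplace p t \<partial>lborel) = ennreal s * Phi p s"
    using nn_integral_eq_integral[OF int] Ln li by simp
  also have "\<dots> = ennreal (s * enn2real (Phi p s))"
    using Pfin s by (simp add: ennreal_mult')
  finally show "s * enn2real (Phi p s) = (\<integral>t. indicator {0..s} t * laplace p t \<partial>lborel)"
    using s Ln by (subst (asm) ennreal_inj) (auto intro!: Bochner_Integration.integral_nonneg)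
qed

lemma lap0: "dens p \<Longrightarrow> laplace p 0 = 1"
  by (subst lap_eq(1)) (auto simp: dens_def)

lemma powr_int:
  fixes a s :: real
  assumes "0 < a" "0 \<le> s"
  shows "integrable lborel (\<lambda>t. indicator {0..s} t * t powr a)"
    and "(\<integral>t. indicator {0..s} t * t powr a \<partial>lborel) = s powr (a + 1) / (a + 1)"
proof -
  have c: "continuous_on {0..s} (\<lambda>t. t powr a)"
    by (rule continuous_on_powr'[of _ "\<lambda>t. t" "\<lambda>t. a"]) (use assms in \<open>auto intro: continuous_intros\<close>)
  have si: "set_integrable lborel {0..s} (\<lambda>t. t powr a)"
    by (rule borel_integrable_atLeastAtMost'[OF c])
  then show "integrable lborel (\<lambda>t. indicator {0..s} t * t powr a)"
    by (simp add: set_integrable_def)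
  have "(LINT t : {0..s} | lborel. t powr a) = integral {0..s} (\<lambda>t. t powr a)"
    by (rule set_borel_integral_eq_integral(2)[OF si])
  also have "\<dots> = s powr (a + 1) / (a + 1)"
    by (rule integral_unique, rule has_integral_powr_from_0) (use assms in auto)
  finally show "(\<integral>t. indicator {0..s} t * t powr a \<partial>lborel) = s powr (a + 1) / (a + 1)"
    by (simp add: set_lebesgue_integral_def)
qed

lemma core:
  assumes dp: "dens p" and dq: "dens q" and s: "0 < s" and a: "0 < \<alpha>" and D: "0 \<le> D"
    and bnd: "\<And>t. 0 < t \<Longrightarrow> \<bar>laplace p t - laplace q t\<bar> \<le> D * t powr \<alpha>"
  shows "\<bar>laplace (T_op p) s - laplace (T_op q) s\<bar> \<le> 2 / (\<alpha> + 1) * D * s powr \<alpha>"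
proof -
  define x where "x = enn2real (Phi p s)"
  define y where "y = enn2real (Phi q s)"
  have x01: "0 \<le> x" "x \<le> 1" using key[OF dp s] by (auto simp: x_def)
  have y01: "0 \<le> y" "y \<le> 1" using key[OF dq s] by (auto simp: y_def)
  have "s * (x - y) = (\<integral>t. indicator {0..s} t * laplace p t \<partial>lborel) - (\<integral>t. indicator {0..s} t * laplace q t \<partial>lborel)"
    using key(2)[OF dp s] key(2)[OF dq s] by (simp add: x_def y_def right_diff_distrib)
  also have "\<dots> = (\<integral>t. indicator {0..s} t * laplace p t - indicator {0..s} t * laplace q t \<partial>lborel)"
    using key(3)[OF dp s] key(3)[OF dq s] by simp
  finally have e: "s * (x - y) = (\<integral>t. indicator {0..s} t * laplace p t - indicator {0..s} t * laplace q t \<partial>lborel)" .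
  have "\<bar>s * (x - y)\<bar> \<le> (\<integral>t. D * (indicator {0..s} t * t powr \<alpha>) \<partial>lborel)"
    unfolding e
  proof (rule integral_abs_bound_integral)
    show "integrable lborel (\<lambda>t. indicator {0..s} t * laplace p t - indicator {0..s} t * laplace q t)"
      using key(3)[OF dp s] key(3)[OF dq s] by simp
    show "integrable lborel (\<lambda>t. D * (indicator {0..s} t * t powr \<alpha>))"
      using powr_int(1)[OF a, of s] s by simp
    fix t :: real
    show "\<bar>indicator {0..s} t * laplace p t - indicator {0..s} t * laplace q t\<bar> \<le> D * (indicator {0..s} t * t powr \<alpha>)"
    proof (cases "t \<in> {0..s}")
      case True
      show ?thesis
      proof (cases "t = 0")
        case True then show ?thesis using lap0[OF dp] lap0[OF dq] by simp
      next
        case False then show ?thesis using \<open>t \<in> {0..s}\<close> bnd[of t] by simp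
      qed
    qed simp
  qed
  also have "\<dots> = D * (s powr (\<alpha> + 1) / (\<alpha> + 1))"
    using powr_int(2)[OF a, of s] s by simp
  also have "\<dots> = s * (D * s powr \<alpha> / (\<alpha> + 1))"
    using s by (simp add: powr_add)
  finally have "s * \<bar>x - y\<bar> \<le> s * (D * s powr \<alpha> / (\<alpha> + 1))"
    using s by (simp add: abs_mult)
  then have xy: "\<bar>x - y\<bar> \<le> D * s powr \<alpha> / (\<alpha> + 1)"
    using s by (metis mult_le_cancel_left_pos)
  have "x^2 - y^2 = (x - y) * (x + y)" by algebra
  then have "\<bar>x^2 - y^2\<bar> = \<bar>x - y\<bar> * (x + y)"
    using x01 y01 by (simp add: abs_mult)
  also have "\<dots> \<le> \<bar>x - y\<bar> * 2"
    using x01 y01 by (intro mult_left_mono) auto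
  also have "\<dots> \<le> (D * s powr \<alpha> / (\<alpha> + 1)) * 2"
    by (rule mult_right_mono[OF xy]) simp
  also have "(D * s powr \<alpha> / (\<alpha> + 1)) * 2 = 2 / (\<alpha> + 1) * D * s powr \<alpha>"
    by simp
  finally show ?thesis
    using key(1)[OF dp s] key(1)[OF dq s] by (simp add: x_def y_def)
qed

theorem lemma3:
  fixes \<alpha> w :: real and p q :: "real \<Rightarrow> real"
  assumes "1 < \<alpha>" "\<alpha> < 2" "0 < w"
    and "p \<in> P_class \<alpha> w" "q \<in> P_class \<alpha> w"
  shows "d_alpha \<alpha> (T_op p) (T_op q) \<le> ereal (2 / (\<alpha> + 1)) * d_alpha \<alpha> p q"
proof -
  have dp: "dens p" and dq: "dens q" using assms P_class_dens by auto
  have a: "0 < \<alpha>" using assms by simp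
  have bnd0: "\<And>t. 0 < t \<Longrightarrow> ereal (\<bar>laplace p t - laplace q t\<bar> / t powr \<alpha>) \<le> d_alpha \<alpha> p q"
    unfolding d_alpha_def by (rule SUP_upper) simp
  show ?thesis
    unfolding d_alpha_def[of \<alpha> "T_op p"]
  proof (rule SUP_least)
    fix s :: real assume "s \<in> {0<..}"
    then have s: "0 < s" by simp
    show "ereal (\<bar>laplace (T_op p) s - laplace (T_op q) s\<bar> / s powr \<alpha>) \<le> ereal (2 / (\<alpha> + 1)) * d_alpha \<alpha> p q"
    proof (cases "d_alpha \<alpha> p q")
      case (real D)
      have "0 \<le> D" using bnd0[of 1] real by (simp add: order_trans)
      have bnd: "\<bar>laplace p t - laplace q t\<bar> \<le> D * t powr \<alpha>" if "0 < t" for t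
        using bnd0[OF that] real that by (simp add: divide_le_eq)
      have "\<bar>laplace (T_op p) s - laplace (T_op q) s\<bar> \<le> 2 / (\<alpha> + 1) * D * s powr \<alpha>"
        by (rule core[OF dp dq s a \<open>0 \<le> D\<close> bnd])
      then have "\<bar>laplace (T_op p) s - laplace (T_op q) s\<bar> / s powr \<alpha> \<le> 2 / (\<alpha> + 1) * D"
        using s by (simp add: divide_le_eq)
      then show ?thesis using real by simp
    next
      case PInf
      then show ?thesis using a by simp
    next
      case MInf
      then show ?thesis using bnd0[of 1] by simp
    qed
  qed
qed


end
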